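(* Let $\psi\in C^1((0,\infty))$. (1) If $\psi$ is concave, then $C_\psi\ge0$. (2) If $\psi(x)+\psi(1/x)\neq2\psi(1)$ for some $x>0$, then $C_\psi\le0$.
   Context: For $x,y>0$, $\widetilde{\psi}(x,y):=[\psi'(x)+\psi'(y)](1-xy)+x[\psi(y)-\psi(1/x)]+y[\psi(x)-\psi(1/y)]$, and $C_\psi:=\inf\frac{\widetilde{\psi}(x,y)}{(\psi(x)+\psi(y)-2\psi(1))^2}\in[-\infty,\infty]$, the infimum taken over all $x,y>0$ with $\psi(x)+\psi(y)\neq2\psi(1)$. *)

theory Defs
  imports "HOL-Analysis.Analysis"
begin

definition C1_pos :: "(real \<Rightarrow> real) \<Rightarrow> bool" where
  "C1_pos \<psi> \<longleftrightarrow> (\<forall>x>0. \<psi> differentiable (at x)) \<and> continuous_on {0<..} (deriv \<psi>)"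

definition psi_tilde :: "(real \<Rightarrow> real) \<Rightarrow> real \<Rightarrow> real \<Rightarrow> real" where
  "psi_tilde \<psi> x y =
     (deriv \<psi> x + deriv \<psi> y) * (1 - x * y) + x * (\<psi> y - \<psi> (1 / x)) + y * (\<psi> x - \<psi> (1 / y))"

text \<open>C_psi as an extended real (infimum over the admissible set; Inf of empty set is top).\<close>
definition C_psi :: "(real \<Rightarrow> real) \<Rightarrow> ereal" where
  "C_psi \<psi> = (INF p \<in> {(x, y). x > 0 \<and> y > 0 \<and> \<psi> x + \<psi> y \<noteq> 2 * \<psi> 1}.
      ereal (psi_tilde \<psi> (fst p) (snd p) / (\<psi> (fst p) + \<psi> (snd p) - 2 * \<psi> 1)\<^sup>2))"

end

theory Submission
  imports Defs
begin

lemma tangent_le: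
  fixes \<psi> :: "real \<Rightarrow> real"
  assumes C: "C1_pos \<psi>" and cc: "concave_on {0<..} \<psi>" and a: "a > 0" and b: "b > 0"
  shows "\<psi> b - \<psi> a \<le> deriv \<psi> a * (b - a)"
proof -
  have cv: "convex_on {0<..} (\<lambda>x. - \<psi> x)" using cc by (simp add: concave_on_def)
  have d: "\<psi> differentiable (at a)" using C a by (simp add: C1_pos_def)
  hence "(\<psi> has_field_derivative deriv \<psi> a) (at a)"
    by (rule DERIV_deriv_iff_real_differentiable[THEN iffD2])
  hence "((\<lambda>x. - \<psi> x) has_field_derivative - deriv \<psi> a) (at a within {0<..})"
    by (rule has_field_derivative_at_within[OF DERIV_minus])
  from convex_on_imp_above_tangent[OF cv _ _ _ this, of b]
  have "- \<psi> b - - \<psi> a \<ge> - deriv \<psi> a * (b - a)" using a b by (simp add: interior_open)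
  thus ?thesis by simp
qed

theorem mainTheorem15:
  fixes \<psi> :: "real \<Rightarrow> real"
  assumes "C1_pos \<psi>"
  shows "(concave_on {0<..} \<psi> \<longrightarrow> C_psi \<psi> \<ge> 0)
     \<and> ((\<exists>x>0. \<psi> x + \<psi> (1 / x) \<noteq> 2 * \<psi> 1) \<longrightarrow> C_psi \<psi> \<le> 0)"
proof (intro conjI impI)
  assume cc: "concave_on {0<..} \<psi>"
  have nn: "psi_tilde \<psi> x y \<ge> 0" if x: "x > 0" and y: "y > 0" for x y
  proof -
    have h1: "\<psi> (1/x) - \<psi> y \<le> deriv \<psi> y * (1/x - y)"
      using tangent_le[OF assms cc y] x by simp
    have h2: "\<psi> (1/y) - \<psi> x \<le> deriv \<psi> x * (1/y - x)"
      using tangent_le[OF assms cc x] y by simp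
    have h3: "x * (\<psi> (1/x) - \<psi> y) \<le> deriv \<psi> y * (1 - x*y)"
      using mult_left_mono[OF h1, of x] x by (simp add: algebra_simps)
    have h4: "y * (\<psi> (1/y) - \<psi> x) \<le> deriv \<psi> x * (1 - x*y)"
      using mult_left_mono[OF h2, of y] y by (simp add: algebra_simps)
    show ?thesis using h3 h4 unfolding psi_tilde_def by (simp add: algebra_simps)
  qed
  show "C_psi \<psi> \<ge> 0" unfolding C_psi_def
  proof (rule INF_greatest)
    fix p assume "p \<in> {(x, y). x > 0 \<and> y > 0 \<and> \<psi> x + \<psi> y \<noteq> 2 * \<psi> 1}"
    then obtain a b where p: "p = (a, b)" and a: "a > 0" and b: "b > 0" by auto
    have "0 \<le> psi_tilde \<psi> a b / (\<psi> a + \<psi> b - 2 * \<psi> 1)\<^sup>2"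
      by (rule divide_nonneg_nonneg[OF nn[OF a b]]) simp
    thus "0 \<le> ereal (psi_tilde \<psi> (fst p) (snd p) / (\<psi> (fst p) + \<psi> (snd p) - 2 * \<psi> 1)\<^sup>2)"
      using p by simp
  qed
next
  assume "\<exists>x>0. \<psi> x + \<psi> (1 / x) \<noteq> 2 * \<psi> 1"
  then obtain x where x: "x > 0" and ne: "\<psi> x + \<psi> (1 / x) \<noteq> 2 * \<psi> 1" by blast
  have mem: "(x, 1/x) \<in> {(x, y). x > 0 \<and> y > 0 \<and> \<psi> x + \<psi> y \<noteq> 2 * \<psi> 1}"
    using x ne by auto
  have z: "psi_tilde \<psi> x (1/x) = 0" using x unfolding psi_tilde_def by simp
  have le:  "C_psi \<psi> \<le> (\<lambda>p. ereal (psi_tilde \<psi> (fst p) (snd p) / (\<psi> (fst p) + \<psi> (snd p) - 2 * \<psi> 1)\<^sup>2)) (x, 1/x)"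
    unfolding C_psi_def by (rule INF_lower[OF mem])
  have "(\<lambda>p. ereal (psi_tilde \<psi> (fst p) (snd p) / (\<psi> (fst p) + \<psi> (snd p) - 2 * \<psi> 1)\<^sup>2)) (x, 1/x) = ereal 0"
    using z by simp
  with le have "C_psi \<psi> \<le> ereal 0" by (rule ord_le_eq_trans)
  moreover have "ereal 0 = 0" by (rule zero_ereal_def[symmetric])
  ultimately show "C_psi \<psi> \<le> 0" by (rule ord_le_eq_trans)
qed

end
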